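(* For integers $m\ge1$ and $1\le i\le m$, let $F_{m,i}(n,k)$ be the number of partitions $\lambda$ of $n$ with $X_{m,i}(\lambda)=k$. Then, as formal power series in $q,u$, $$\sum_{n,k\ge0}F_{m,i}(n,k)q^nu^k=\prod_{a\ge0}\left(\prod_{b=1}^{i-1}\frac{1}{1-u^aq^{am+b}}\prod_{b=i}^{m}\frac{1}{1-u^{a+1}q^{am+b}}\right).$$
   Context: For a partition $\lambda:\ n=\lambda_1+\dots+\lambda_k$ with $\lambda_1\ge\dots\ge\lambda_k\ge1$, $X_{m,i}(\lambda)=\sum_{j\equiv i\pmod m}\lambda_j$, the sum of the parts whose index is congruent to $i$ modulo $m$. *)

theory Defs
  imports "HOL-Computational_Algebra.Formal_Power_Series"
begin

definition partitions :: "nat \<Rightarrow> nat list set" where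
  "partitions n = {xs. sorted_wrt (\<ge>) xs \<and> (\<forall>x\<in>set xs. 0 < x) \<and> sum_list xs = n}"

text \<open>X_{m,i}(lambda): sum of the parts lambda_j (1-indexed j) with j congruent to i mod m.
  The list entry xs!j is the part lambda_(j+1).\<close>
definition Xmi :: "nat \<Rightarrow> nat \<Rightarrow> nat list \<Rightarrow> nat" where
  "Xmi m i xs = (\<Sum>j<length xs. if (j + 1) mod m = i mod m then xs ! j else 0)"

definition Fmi :: "nat \<Rightarrow> nat \<Rightarrow> nat \<Rightarrow> nat \<Rightarrow> nat" where
  "Fmi m i n k = card {xs \<in> partitions n. Xmi m i xs = k}"

text \<open>Bivariate formal power series in q,u are modelled as (rat fps) fps:
  the outer variable is q (fps_X), the inner variable u is fps_const fps_X.\<close>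
definition qvar :: "rat fps fps" where "qvar = fps_X"
definition uvar :: "rat fps fps" where "uvar = fps_const fps_X"

definition gen_F :: "nat \<Rightarrow> nat \<Rightarrow> rat fps fps" where
  "gen_F m i = Abs_fps (\<lambda>n. Abs_fps (\<lambda>k. of_nat (Fmi m i n k)))"

definition prod_factor :: "nat \<Rightarrow> nat \<Rightarrow> nat \<Rightarrow> rat fps fps" where
  "prod_factor m i a =
     (\<Prod>b\<in>{1..<i}. inverse (1 - uvar ^ a * qvar ^ (a * m + b))) *
     (\<Prod>b\<in>{i..m}. inverse (1 - uvar ^ (a + 1) * qvar ^ (a * m + b)))"

end

theory Submission
  imports Defs
begin

unbundle fps_syntax

definition cnt :: "nat \<Rightarrow> nat \<Rightarrow> nat \<Rightarrow> nat" where
  "cnt m i p = (\<Sum>j<p. if (j+1) mod m = i mod m then 1 else 0)"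

definition Gs :: "nat \<Rightarrow> nat \<Rightarrow> rat fps fps" where
  "Gs c p = Abs_fps (\<lambda>n. if p dvd n then fps_X ^ (c * (n div p)) else 0)"

lemma inv_factor:
  assumes p: "p \<ge> 1"
  shows "inverse (1 - uvar ^ c * qvar ^ p) = Gs c p"
proof -
  let ?f = "1 - uvar ^ c * qvar ^ p"
  have f0: "(?f) $ 0 = 1" using p by (simp add: uvar_def qvar_def)
  have fg: "?f * Gs c p = 1"
  proof (rule fps_ext)
    fix n
    have "(?f * Gs c p) $ n = Gs c p $ n - fps_X ^ c * (if p \<le> n then Gs c p $ (n - p) else 0)"
    proof -
      have eq: "uvar ^ c * qvar ^ p * Gs c p = fps_const (fps_X ^ c) * (fps_X ^ p * Gs c p)"
        by (simp add: uvar_def qvar_def fps_const_power mult.assoc)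
      have "(uvar ^ c * qvar ^ p * Gs c p) $ n = fps_X ^ c * (if p \<le> n then Gs c p $ (n - p) else 0)"
        unfolding eq by (simp add: fps_X_power_mult_nth)
      thus ?thesis by (simp add: left_diff_distrib)
    qed
    also have "\<dots> = 1 $ n"
    proof (cases "n = 0")
      case True thus ?thesis using p by (simp add: Gs_def)
    next
      case False
      show ?thesis
      proof (cases "p \<le> n")
        case True
        have d: "p dvd n \<longleftrightarrow> p dvd (n - p)" using True by (simp add: dvd_minus_self)
        show ?thesis
        proof (cases "p dvd n")
          case True2: True
          then obtain k where k: "n = p * k" by blast
          with True p have "k \<ge> 1" by (cases k) auto
          hence "c * k = c + c * (k - 1)" by (cases k) auto
          moreover have "(n - p) div p = k - 1" proof -
            have "n - p = p * (k - 1)" using k by (simp add: diff_mult_distrib2)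
            thus ?thesis using p by simp
          qed
          ultimately show ?thesis using True2 d True False k p by (simp add: Gs_def power_add)
        qed (use d True False in \<open>simp add: Gs_def\<close>)
      next
        case False2: False
        hence "\<not> p dvd n" using False by (auto dest: dvd_imp_le)
        thus ?thesis using False False2 by (simp add: Gs_def)
      qed
    qed
    finally show "(?f * Gs c p) $ n = 1 $ n" .
  qed
  have "inverse ?f = fps_right_inverse ?f (inverse ((?f) $ 0))"
    by (simp only: fps_inverse_def)
  also have "\<dots> = fps_right_inverse ?f (Gs c p $ 0)"
    by (simp only: f0 fps_inverse_one) (simp add: Gs_def)
  also have "\<dots> = Gs c p"
    by (rule fps_lr_inverse_unique_ring1(2)) (use fg f0 in \<open>simp_all add: Gs_def\<close>)
  finally show ?thesis .
qed

lemma cnt_Suc: "cnt m i (Suc p) = cnt m i p + (if (p+1) mod m = i mod m then 1 else 0)"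
  by (simp add: cnt_def)

lemma cnt_small:
  assumes "1 \<le> i" "i \<le> m" "b \<le> m"
  shows "cnt m i b = (if i \<le> b then 1 else 0)"
  using assms(3)
proof (induction b)
  case 0 then show ?case using assms by (simp add: cnt_def)
next
  case (Suc b)
  have "(b+1) mod m = i mod m \<longleftrightarrow> b + 1 = i"
  proof (cases "b + 1 = m")
    case True then show ?thesis using assms by (cases "i = m") auto
  next
    case False
    with Suc.prems have bm: "b+1 < m" by simp
    show ?thesis
    proof (cases "i = m")
      case True then show ?thesis using bm by simp
    next
      case False then show ?thesis using bm assms by simp
    qed
  qed
  then show ?case using Suc by (simp add: cnt_Suc)
qed

lemma cnt_shift:
  assumes "1 \<le> i" "i \<le> m"
  shows "cnt m i (m + p) = 1 + cnt m i p"
proof (induction p)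
  case 0 then show ?case using cnt_small[OF assms, of m] assms by (simp add: cnt_def)
next
  case (Suc p)
  have "(m + p + 1) mod m = (p+1) mod m"
    by (metis add.assoc add.commute mod_add_self2)
  then show ?case using Suc by (simp add: cnt_Suc)
qed

lemma cnt_main:
  assumes "1 \<le> i" "i \<le> m" "b \<le> m"
  shows "cnt m i (N * m + b) = N + (if i \<le> b then 1 else 0)"
proof (induction N)
  case 0 then show ?case using cnt_small[OF assms] by simp
next
  case (Suc N)
  have "Suc N * m + b = m + (N * m + b)" by simp
  then show ?case using Suc cnt_shift[OF assms(1,2), of "N * m + b"] by (simp add: add.assoc)
qed


definition SP :: "nat \<Rightarrow> nat \<Rightarrow> nat list set" where
  "SP P n = {xs. length xs = P \<and> sorted_wrt (\<ge>) xs \<and> sum_list xs = n}"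

definition TP :: "nat \<Rightarrow> nat \<Rightarrow> nat \<Rightarrow> rat fps fps" where
  "TP m i P = Abs_fps (\<lambda>n. \<Sum>xs\<in>SP P n. (fps_X :: rat fps) ^ Xmi m i xs)"

definition ext :: "nat \<Rightarrow> nat list \<Rightarrow> nat list" where
  "ext k ys = map (\<lambda>y. y + k) ys @ [k]"

lemma SP_finite: "finite (SP P n)"
proof (rule finite_subset)
  show "SP P n \<subseteq> {xs. set xs \<subseteq> {..n} \<and> length xs = P}"
    by (auto simp: SP_def member_le_sum_list)
  show "finite {xs. set xs \<subseteq> {..n} \<and> length xs = P}"
    by (rule finite_lists_length_eq) simp
qed

lemma TP0: "TP m i 0 = 1"
proof (rule fps_ext)
  fix n
  have "SP 0 n = (if n = 0 then {[]} else {})" by (auto simp: SP_def)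
  thus "TP m i 0 $ n = 1 $ n" by (simp add: TP_def Xmi_def)
qed

lemma Xmi_ext:
  assumes "length ys = P"
  shows "Xmi m i (ext k ys) = Xmi m i ys + k * cnt m i (Suc P)"
proof -
  let ?c = "\<lambda>j. (j + 1) mod m = i mod m"
  have "Xmi m i (ext k ys) = (\<Sum>j<P. if ?c j then ext k ys ! j else 0) + (if ?c P then k else 0)"
    using assms by (simp add: Xmi_def nth_append) (simp add: ext_def nth_append)
  also have "(\<Sum>j<P. if ?c j then ext k ys ! j else 0) =
      (\<Sum>j<P. (if ?c j then ys ! j else 0) + k * (if ?c j then 1 else 0))"
    by (rule sum.cong) (use assms in \<open>auto simp: ext_def nth_append\<close>)
  also have "\<dots> = Xmi m i ys + k * cnt m i P"
    using assms by (simp add: sum.distrib sum_distrib_left Xmi_def cnt_def)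
  finally show ?thesis by (simp add: cnt_Suc algebra_simps)
qed

lemma sum_list_map_minus:
  "\<forall>x\<in>set zs. l \<le> x \<Longrightarrow> sum_list (map (\<lambda>x. x - l) zs) + length zs * l = sum_list zs"
  by (induction zs) auto

lemma sum_list_ext: "sum_list (ext k ys) = sum_list ys + length ys * k + k"
  by (induction ys) (auto simp: ext_def)

lemma ext_in:
  assumes k: "k \<in> {..n div Suc P}" and ys: "ys \<in> SP P (n - Suc P * k)"
  shows "ext k ys \<in> SP (Suc P) n"
proof -
  have kn: "k * Suc P \<le> n" using k less_eq_div_iff_mult_less_eq[of "Suc P" k n] by simp
  have s: "sorted_wrt (\<ge>) ys" using ys by (simp add: SP_def)
  have "sorted_wrt (\<ge>) (map (\<lambda>y. y + k) ys)"
    unfolding sorted_wrt_map by (rule sorted_wrt_mono_rel[OF _ s]) auto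
  hence "sorted_wrt (\<ge>) (ext k ys)" by (auto simp: ext_def sorted_wrt_append)
  moreover have "sum_list (ext k ys) = n" using ys kn by (simp add: sum_list_ext SP_def algebra_simps)
  ultimately show ?thesis using ys by (simp add: SP_def ext_def)
qed

lemma wit_in:
  assumes xs: "xs \<in> SP (Suc P) n"
  shows "last xs \<in> {..n div Suc P} \<and>
        map (\<lambda>x. x - last xs) (butlast xs) \<in> SP P (n - Suc P * last xs)"
proof -
  have ne: "xs \<noteq> []" using xs by (auto simp: SP_def)
  hence eq: "xs = butlast xs @ [last xs]" by simp
  have "sorted_wrt (\<ge>) (butlast xs @ [last xs])" using xs eq by (simp add: SP_def)
  hence ge: "\<forall>x\<in>set (butlast xs). last xs \<le> x" and sb: "sorted_wrt (\<ge>) (butlast xs)"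
    by (simp_all add: sorted_wrt_append)
  have lb: "length (butlast xs) = P" using xs by (simp add: SP_def)
  have "sum_list xs = sum_list (butlast xs) + last xs" using eq
    by (metis sum_list_append sum_list_simps(1,2) add_0_right)
  hence sx: "sum_list (butlast xs) + last xs = n" using xs by (simp add: SP_def)
  have sm: "sum_list (map (\<lambda>x. x - last xs) (butlast xs)) + P * last xs = sum_list (butlast xs)"
    using sum_list_map_minus[OF ge] lb by simp
  have "last xs * Suc P \<le> n" using sx sm by (simp add: algebra_simps)
  hence k: "last xs \<le> n div Suc P" using less_eq_div_iff_mult_less_eq[of "Suc P" "last xs" n] by simp
  have "sorted_wrt (\<ge>) (map (\<lambda>x. x - last xs) (butlast xs))"
    unfolding sorted_wrt_map by (rule sorted_wrt_mono_rel[OF _ sb]) auto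
  moreover have "sum_list (map (\<lambda>x. x - last xs) (butlast xs)) = n - Suc P * last xs"
    using sx sm by simp
  ultimately show ?thesis
    using k lb by (simp add: SP_def)
qed

lemma SP_Suc_bij:
  "bij_betw (\<lambda>(k, ys). ext k ys) (SIGMA k:{..n div Suc P}. SP P (n - Suc P * k)) (SP (Suc P) n)"
proof (rule bij_betw_byWitness[where f' = "\<lambda>xs. (last xs, map (\<lambda>x. x - last xs) (butlast xs))"])
  show "\<forall>a\<in>(SIGMA k:{..n div Suc P}. SP P (n - Suc P * k)).
      (\<lambda>xs. (last xs, map (\<lambda>x. x - last xs) (butlast xs))) ((\<lambda>(k, ys). ext k ys) a) = a"
    by (auto simp: ext_def comp_def)
  show "\<forall>a'\<in>SP (Suc P) n. (\<lambda>(k, ys). ext k ys) ((\<lambda>xs. (last xs, map (\<lambda>x. x - last xs) (butlast xs))) a') = a'"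
  proof
    fix xs assume xs: "xs \<in> SP (Suc P) n"
    hence ne: "xs \<noteq> []" by (auto simp: SP_def)
    hence eq: "xs = butlast xs @ [last xs]" by simp
    have "sorted_wrt (\<ge>) (butlast xs @ [last xs])" using xs eq by (simp add: SP_def)
    hence ge: "\<forall>x\<in>set (butlast xs). last xs \<le> x" by (simp add: sorted_wrt_append)
    have "map (\<lambda>y. y + last xs) (map (\<lambda>x. x - last xs) (butlast xs)) = butlast xs"
      using ge by (simp add: map_idI)
    thus "(\<lambda>(k, ys). ext k ys) ((\<lambda>xs. (last xs, map (\<lambda>x. x - last xs) (butlast xs))) xs) = xs"
      using eq by (simp add: ext_def)
  qed
  show "(\<lambda>(k, ys). ext k ys) ` (SIGMA k:{..n div Suc P}. SP P (n - Suc P * k)) \<subseteq> SP (Suc P) n"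
    using ext_in by auto
  show "(\<lambda>xs. (last xs, map (\<lambda>x. x - last xs) (butlast xs))) ` SP (Suc P) n
      \<subseteq> (SIGMA k:{..n div Suc P}. SP P (n - Suc P * k))"
    using wit_in by blast
qed


lemma TP_Suc: "TP m i (Suc P) = TP m i P * Gs (cnt m i (Suc P)) (Suc P)"
proof (rule fps_ext)
  fix n
  define d where "d = Suc P"
  define c where "c = cnt m i (Suc P)"
  define K where "K = {..n div d}"
  have d0: "d > 0" by (simp add: d_def)
  have kle: "d * k \<le> n" if "k \<in> K" for k
    using that less_eq_div_iff_mult_less_eq[of d k n] d0 by (simp add: K_def mult.commute)
  have "TP m i (Suc P) $ n = (\<Sum>xs\<in>SP (Suc P) n. (fps_X :: rat fps) ^ Xmi m i xs)"
    by (simp add: TP_def)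
  also have "\<dots> = (\<Sum>z\<in>(SIGMA k:K. SP P (n - d * k)). (fps_X :: rat fps) ^ Xmi m i ((\<lambda>(k, ys). ext k ys) z))"
    using sum.reindex_bij_betw[OF SP_Suc_bij[of n P], of "\<lambda>xs. (fps_X :: rat fps) ^ Xmi m i xs"]
    by (simp add: K_def d_def)
  also have "\<dots> = (\<Sum>z\<in>(SIGMA k:K. SP P (n - d * k)). (case z of (k, ys) \<Rightarrow> (fps_X :: rat fps) ^ Xmi m i ys * fps_X ^ (c * k)))"
  proof (rule sum.cong[OF refl])
    fix z assume "z \<in> (SIGMA k:K. SP P (n - d * k))"
    then obtain k ys where z: "z = (k, ys)" and "ys \<in> SP P (n - d * k)" by blast
    hence "length ys = P" by (simp add: SP_def)
    thus "(fps_X :: rat fps) ^ Xmi m i ((\<lambda>(k, ys). ext k ys) z) = (case z of (k, ys) \<Rightarrow> (fps_X :: rat fps) ^ Xmi m i ys * fps_X ^ (c * k))"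
      using z by (simp add: Xmi_ext c_def power_add mult.commute)
  qed
  also have "\<dots> = (\<Sum>k\<in>K. \<Sum>ys\<in>SP P (n - d * k). (fps_X :: rat fps) ^ Xmi m i ys * fps_X ^ (c * k))"
    by (subst sum.Sigma) (auto simp: K_def SP_finite)
  also have "\<dots> = (\<Sum>k\<in>K. TP m i P $ (n - d * k) * fps_X ^ (c * k))"
    by (simp add: TP_def sum_distrib_right)
  also have "\<dots> = (\<Sum>j\<in>{j\<in>{0..n}. d dvd (n - j)}. TP m i P $ j * fps_X ^ (c * ((n - j) div d)))"
  proof -
    have inj: "inj_on (\<lambda>k. n - d * k) K"
    proof (rule inj_onI)
      fix k k' assume "k \<in> K" "k' \<in> K" "n - d * k = n - d * k'"
      hence "d * k = d * k'" using kle by (metis diff_diff_cancel)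
      thus "k = k'" using d0 by simp
    qed
    have img: "(\<lambda>k. n - d * k) ` K = {j\<in>{0..n}. d dvd (n - j)}"
    proof
      show "(\<lambda>k. n - d * k) ` K \<subseteq> {j\<in>{0..n}. d dvd (n - j)}"
        using kle by (auto simp: diff_diff_cancel)
      show "{j\<in>{0..n}. d dvd (n - j)} \<subseteq> (\<lambda>k. n - d * k) ` K"
      proof clarify
        fix j assume j: "j \<in> {0..n}" "d dvd (n - j)"
        then obtain k where k: "n - j = d * k" by blast
        have "k \<in> K" using k d0 less_eq_div_iff_mult_less_eq[of d k n] by (simp add: K_def mult.commute)
        moreover have "j = n - d * k" using k j by simp
        ultimately show "j \<in> (\<lambda>k. n - d * k) ` K" by blast
      qed
    qed
    have "(\<Sum>j\<in>{j\<in>{0..n}. d dvd (n - j)}. TP m i P $ j * fps_X ^ (c * ((n - j) div d)))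
        = (\<Sum>k\<in>K. TP m i P $ (n - d * k) * fps_X ^ (c * ((n - (n - d * k)) div d)))"
      unfolding img[symmetric] by (subst sum.reindex[OF inj]) simp
    also have "\<dots> = (\<Sum>k\<in>K. TP m i P $ (n - d * k) * fps_X ^ (c * k))"
      by (rule sum.cong[OF refl]) (use kle d0 in \<open>simp add: diff_diff_cancel\<close>)
    finally show ?thesis by simp
  qed
  also have "\<dots> = (\<Sum>j=0..n. TP m i P $ j * Gs c d $ (n - j))"
    by (rule sum.mono_neutral_cong_left) (auto simp: Gs_def)
  also have "\<dots> = (TP m i P * Gs (cnt m i (Suc P)) (Suc P)) $ n"
    by (simp add: fps_mult_nth c_def d_def)
  finally show "TP m i (Suc P) $ n = (TP m i P * Gs (cnt m i (Suc P)) (Suc P)) $ n" .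
qed


lemma TP_add: "TP m i (P + b) = TP m i P * (\<Prod>b'\<in>{1..b}. Gs (cnt m i (P + b')) (P + b'))"
proof (induction b)
  case 0 then show ?case by simp
next
  case (Suc b)
  have "{1..Suc b} = insert (Suc b) {1..b}" by auto
  then show ?case using Suc by (simp add: TP_Suc mult_ac)
qed

lemma prod_factor_eq:
  assumes "1 \<le> m" "1 \<le> i" "i \<le> m"
  shows "prod_factor m i N = (\<Prod>b\<in>{1..m}. Gs (cnt m i (N * m + b)) (N * m + b))"
proof -
  have "{1..m} = {1..<i} \<union> {i..m}" using assms by auto
  hence "(\<Prod>b\<in>{1..m}. Gs (cnt m i (N * m + b)) (N * m + b)) =
     (\<Prod>b\<in>{1..<i}. Gs (cnt m i (N * m + b)) (N * m + b)) * (\<Prod>b\<in>{i..m}. Gs (cnt m i (N * m + b)) (N * m + b))"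
    by (simp add: prod.union_disjoint ivl_disj_int)
  also have "(\<Prod>b\<in>{1..<i}. Gs (cnt m i (N * m + b)) (N * m + b)) =
      (\<Prod>b\<in>{1..<i}. inverse (1 - uvar ^ N * qvar ^ (N * m + b)))"
  proof (rule prod.cong[OF refl])
    fix b assume b: "b \<in> {1..<i}"
    hence "cnt m i (N * m + b) = N" using cnt_main[OF assms(2,3), of b N] assms by auto
    thus "Gs (cnt m i (N * m + b)) (N * m + b) = inverse (1 - uvar ^ N * qvar ^ (N * m + b))"
      using inv_factor[of "N * m + b" N] b by simp
  qed
  also have "(\<Prod>b\<in>{i..m}. Gs (cnt m i (N * m + b)) (N * m + b)) =
      (\<Prod>b\<in>{i..m}. inverse (1 - uvar ^ (N + 1) * qvar ^ (N * m + b)))"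
  proof (rule prod.cong[OF refl])
    fix b assume b: "b \<in> {i..m}"
    hence "cnt m i (N * m + b) = N + 1" using cnt_main[OF assms(2,3), of b N] assms by auto
    thus "Gs (cnt m i (N * m + b)) (N * m + b) = inverse (1 - uvar ^ (N + 1) * qvar ^ (N * m + b))"
      using inv_factor[of "N * m + b" "N + 1"] b assms by simp
  qed
  finally show ?thesis by (simp add: prod_factor_def mult.commute)
qed

lemma prod_eq_TP:
  assumes "1 \<le> m" "1 \<le> i" "i \<le> m"
  shows "(\<Prod>a<N. prod_factor m i a) = TP m i (N * m)"
proof (induction N)
  case 0 then show ?case by (simp add: TP0)
next
  case (Suc N)
  have "TP m i (Suc N * m) = TP m i (N * m + m)" by (simp add: add.commute)
  also have "\<dots> = TP m i (N * m) * prod_factor m i N"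
    by (simp only: TP_add prod_factor_eq[OF assms])
  finally show ?case using Suc by simp
qed


lemma len_le_sum: "\<forall>x\<in>set ys. (0::nat) < x \<Longrightarrow> length ys \<le> sum_list ys"
  by (induction ys) auto

lemma dec_split:
  "sorted_wrt (\<ge>) (xs :: nat list) \<Longrightarrow>
     xs = filter (\<lambda>x. 0 < x) xs @ replicate (length xs - length (filter (\<lambda>x. 0 < x) xs)) 0"
proof (induction xs)
  case Nil then show ?case by simp
next
  case (Cons x xs)
  show ?case
  proof (cases "0 < x")
    case True
    have "length (filter (\<lambda>x. 0 < x) xs) \<le> length xs" by (rule length_filter_le)
    then show ?thesis using Cons True by (simp add: Suc_diff_le)
  next
    case False
    hence "\<forall>y\<in>set xs. y = 0" using Cons.prems by auto
    hence "filter (\<lambda>x. 0 < x) xs = []" and "xs = replicate (length xs) 0"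
      by (auto simp: filter_empty_conv intro: replicate_eqI)
    then show ?thesis using False by simp
  qed
qed

lemma Xmi_pad: "Xmi m i (ys @ replicate r 0) = Xmi m i ys"
proof -
  have "Xmi m i (ys @ replicate r 0) =
      (\<Sum>j<length ys + r. if (j + 1) mod m = i mod m then (ys @ replicate r 0) ! j else 0)"
    by (simp add: Xmi_def)
  also have "\<dots> = (\<Sum>j<length ys. if (j + 1) mod m = i mod m then (ys @ replicate r 0) ! j else 0)"
    by (rule sum.mono_neutral_right) (auto simp: nth_append)
  also have "\<dots> = (\<Sum>j<length ys. if (j + 1) mod m = i mod m then ys ! j else 0)"
    by (rule sum.cong) (auto simp: nth_append)
  also have "\<dots> = Xmi m i ys"
    by (simp add: Xmi_def)
  finally show ?thesis .
qed

lemma sorted_wrt_rep0: "sorted_wrt (\<ge>) (replicate r (0::nat))"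
  by (induction r) auto

definition pad :: "nat \<Rightarrow> nat list \<Rightarrow> nat list" where
  "pad P ys = ys @ replicate (P - length ys) 0"

lemma pad_bij:
  assumes "n \<le> P"
  shows "bij_betw (pad P) (partitions n) (SP P n)"
proof (rule bij_betw_byWitness[where f' = "filter (\<lambda>x. 0 < x)"])
  show "\<forall>a\<in>partitions n. filter (\<lambda>x. 0 < x) (pad P a) = a"
    by (auto simp: pad_def partitions_def filter_id_conv)
  show "\<forall>a'\<in>SP P n. pad P (filter (\<lambda>x. 0 < x) a') = a'"
    using dec_split by (auto simp: pad_def SP_def)
  show "pad P ` partitions n \<subseteq> SP P n"
  proof
    fix xs assume "xs \<in> pad P ` partitions n"
    then obtain ys where ys: "ys \<in> partitions n" "xs = pad P ys" by blast
    have "length ys \<le> P" using len_le_sum[of ys] ys assms by (auto simp: partitions_def)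
    moreover have "sorted_wrt (\<ge>) (ys @ replicate (P - length ys) 0)"
      using ys sorted_wrt_rep0[of "P - length ys"] by (auto simp: partitions_def sorted_wrt_append)
    ultimately show "xs \<in> SP P n" using ys by (auto simp: SP_def pad_def partitions_def)
  qed
  show "filter (\<lambda>x. 0 < x) ` SP P n \<subseteq> partitions n"
  proof
    fix ys assume "ys \<in> filter (\<lambda>x. 0 < x) ` SP P n"
    then obtain xs where xs: "xs \<in> SP P n" "ys = filter (\<lambda>x. 0 < x) xs" by blast
    have "sum_list (filter (\<lambda>x. 0 < x) xs) = sum_list xs"
      by (induction xs) auto
    thus "ys \<in> partitions n" using xs by (auto simp: SP_def partitions_def sorted_wrt_filter)
  qed
qed

lemma TP_gen:
  assumes "n \<le> P"
  shows "TP m i P $ n = gen_F m i $ n"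
proof -
  have bij: "bij_betw (pad P) (partitions n) (SP P n)" by (rule pad_bij[OF assms])
  have fin: "finite (partitions n)"
    using bij SP_finite bij_betw_finite by blast
  have "TP m i P $ n = (\<Sum>xs\<in>SP P n. (fps_X :: rat fps) ^ Xmi m i xs)" by (simp add: TP_def)
  also have "\<dots> = (\<Sum>ys\<in>partitions n. (fps_X :: rat fps) ^ Xmi m i (pad P ys))"
    using sum.reindex_bij_betw[OF bij, of "\<lambda>xs. (fps_X :: rat fps) ^ Xmi m i xs"] by simp
  also have "\<dots> = (\<Sum>ys\<in>partitions n. (fps_X :: rat fps) ^ Xmi m i ys)"
    by (simp add: pad_def Xmi_pad)
  also have "\<dots> = gen_F m i $ n"
  proof (rule fps_ext)
    fix k
    have "(\<Sum>ys\<in>partitions n. (fps_X :: rat fps) ^ Xmi m i ys) $ k =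
        (\<Sum>ys\<in>partitions n. if Xmi m i ys = k then 1 else 0)"
      by (simp add: fps_sum_nth eq_commute)
    also have "\<dots> = (\<Sum>ys\<in>{ys \<in> partitions n. Xmi m i ys = k}. 1)"
      using fin by (simp only: sum.inter_filter)
    also have "\<dots> = of_nat (Fmi m i n k)" by (simp add: Fmi_def)
    finally show "(\<Sum>ys\<in>partitions n. (fps_X :: rat fps) ^ Xmi m i ys) $ k = gen_F m i $ n $ k"
      by (simp add: gen_F_def)
  qed
  finally show ?thesis .
qed

theorem mainTheorem7:
  fixes m i :: nat
  assumes "1 \<le> m" and "1 \<le> i" and "i \<le> m"
  shows "(\<lambda>N. \<Prod>a<N. prod_factor m i a) \<longlonglongrightarrow> gen_F m i"
proof (rule tendsto_fpsI)
  fix n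
  show "eventually (\<lambda>N. (\<Prod>a<N. prod_factor m i a) $ n = gen_F m i $ n) sequentially"
  proof (rule eventually_sequentiallyI[of n])
    fix N assume "n \<le> N"
    hence "n \<le> N * m" using assms(1) by (metis le_trans mult.right_neutral mult_le_mono2)
    thus "(\<Prod>a<N. prod_factor m i a) $ n = gen_F m i $ n"
      by (simp add: prod_eq_TP[OF assms] TP_gen)
  qed
qed

end
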